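(* Let $n\ge1$ and let $f:\mathbb{R}^n\to[0,\infty)$ be an isotropic function. Let $x\in\mathbb{R}^n$, $v>0$, and define $g(y)=f(y)\exp\left(-\frac{|x-y|^2}{2v}\right)$ for $y\in\mathbb{R}^n$ (an integrable function). Suppose $X$ is a random vector in $\mathbb{R}^n$ whose density is proportional to $g$. Then (i) $\mathbb{E}|X-x|^2\le n+|x|^2$; (ii) $|\mathbb{E}X-x|\le\sqrt n+|x|$.
   Context: A function $f:\mathbb{R}^n\to[0,\infty)$ is isotropic if it is the probability density of a random vector in $\mathbb{R}^n$ with zero mean and identity covariance matrix. $|\cdot|$ is the Euclidean norm. *)

theory Defs
  imports "HOL-Probability.Probability"
begin

definition isotropic :: "('a::euclidean_space \<Rightarrow> real) \<Rightarrow> bool" where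
  "isotropic f \<longleftrightarrow>
     f \<in> borel_measurable lborel \<and> (\<forall>y. 0 \<le> f y) \<and>
     integrable lborel f \<and> (\<integral>y. f y \<partial>lborel) = 1 \<and>
     integrable lborel (\<lambda>y. f y *\<^sub>R y) \<and> (\<integral>y. f y *\<^sub>R y \<partial>lborel) = 0 \<and>
     integrable lborel (\<lambda>y. f y * (norm y)\<^sup>2) \<and>
     (\<forall>i\<in>Basis. \<forall>j\<in>Basis.
        (\<integral>y. f y * ((y \<bullet> i) * (y \<bullet> j)) \<partial>lborel) = (if i = j then 1 else 0))"

end

theory Submission
  imports Defs
begin

lemma iso_second_moment:
  fixes f :: "'a::euclidean_space \<Rightarrow> real" and x :: 'a
  assumes iso: "isotropic f"
  shows "integrable lborel (\<lambda>y. f y * (norm (y - x))\<^sup>2)"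
    and "(\<integral>y. f y * (norm (y - x))\<^sup>2 \<partial>lborel) = real DIM('a) + (norm x)\<^sup>2"
proof -
  from iso have fm[measurable]: "f \<in> borel_measurable lborel" and f0: "\<And>y. 0 \<le> f y"
    and fi: "integrable lborel f" and f1: "(\<integral>y. f y \<partial>lborel) = 1"
    and fyi: "integrable lborel (\<lambda>y. f y *\<^sub>R y)" and fy0: "(\<integral>y. f y *\<^sub>R y \<partial>lborel) = 0"
    and fni: "integrable lborel (\<lambda>y. f y * (norm y)\<^sup>2)"
    and cov: "\<And>i j. i \<in> Basis \<Longrightarrow> j \<in> Basis \<Longrightarrow> (\<integral>y. f y * ((y \<bullet> i) * (y \<bullet> j)) \<partial>lborel) = (if i = j then 1 else 0)"
    by (auto simp: isotropic_def)
  have eq: "f y * (norm (y - x))\<^sup>2 = f y * (norm y)\<^sup>2 - 2 * (x \<bullet> (f y *\<^sub>R y)) + (norm x)\<^sup>2 * f y" for y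
    by (simp add: power2_norm_eq_inner inner_diff_left inner_diff_right inner_commute algebra_simps)
  have xi: "integrable lborel (\<lambda>y. x \<bullet> (f y *\<^sub>R y))" by (rule integrable_inner_right[OF fyi])
  show i: "integrable lborel (\<lambda>y. f y * (norm (y - x))\<^sup>2)"
    unfolding eq using fni xi fi by auto
  have bi: "integrable lborel (\<lambda>y. f y * ((y \<bullet> i) * (y \<bullet> i)))" if "i \<in> Basis" for i
  proof (rule Bochner_Integration.integrable_bound[OF fni])
    show "(\<lambda>y. f y * ((y \<bullet> i) * (y \<bullet> i))) \<in> borel_measurable lborel" by measurable
    show "AE y in lborel. norm (f y * ((y \<bullet> i) * (y \<bullet> i))) \<le> norm (f y * (norm y)\<^sup>2)"
    proof (rule AE_I2)
      fix y
      have "\<bar>y \<bullet> i\<bar> \<le> norm y" using Basis_le_norm[OF that] .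
      then have "(y \<bullet> i) * (y \<bullet> i) \<le> (norm y)\<^sup>2"
        using power_mono[OF \<open>\<bar>y \<bullet> i\<bar> \<le> norm y\<close>, of 2] by (simp add: power2_eq_square)
      then show "norm (f y * ((y \<bullet> i) * (y \<bullet> i))) \<le> norm (f y * (norm y)\<^sup>2)"
        using f0[of y] by (simp add: abs_mult mult_left_mono)
    qed
  qed
  have n2: "(norm y)\<^sup>2 = (\<Sum>i\<in>Basis. (y \<bullet> i) * (y \<bullet> i))" for y :: 'a
    by (simp add: power2_norm_eq_inner euclidean_inner[of y y])
  have "(\<integral>y. f y * (norm y)\<^sup>2 \<partial>lborel) = (\<integral>y. (\<Sum>i\<in>Basis. f y * ((y \<bullet> i) * (y \<bullet> i))) \<partial>lborel)"
    by (simp add: n2 sum_distrib_left)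
  also have "\<dots> = (\<Sum>i\<in>Basis. (\<integral>y. f y * ((y \<bullet> i) * (y \<bullet> i)) \<partial>lborel))"
    by (rule Bochner_Integration.integral_sum) (use bi in auto)
  also have "\<dots> = real DIM('a)" using cov by simp
  finally have nn: "(\<integral>y. f y * (norm y)\<^sup>2 \<partial>lborel) = real DIM('a)" .
  have "(\<integral>y. x \<bullet> (f y *\<^sub>R y) \<partial>lborel) = 0" using integral_inner_right[of x lborel "\<lambda>y. f y *\<^sub>R y"] fyi fy0 by (simp only: inner_zero_right)
  then show "(\<integral>y. f y * (norm (y - x))\<^sup>2 \<partial>lborel) = real DIM('a) + (norm x)\<^sup>2"
  proof -
    have "(\<integral>y. f y * (norm (y - x))\<^sup>2 \<partial>lborel) = (\<integral>y. f y * (norm y)\<^sup>2 - 2 * (x \<bullet> (f y *\<^sub>R y)) + (norm x)\<^sup>2 * f y \<partial>lborel)"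
      unfolding eq ..
    also have "\<dots> = (\<integral>y. f y * (norm y)\<^sup>2 - 2 * (x \<bullet> (f y *\<^sub>R y)) \<partial>lborel) + (\<integral>y. (norm x)\<^sup>2 * f y \<partial>lborel)"
      by (rule Bochner_Integration.integral_add) (use fni xi fi in auto)
    also have "(\<integral>y. f y * (norm y)\<^sup>2 - 2 * (x \<bullet> (f y *\<^sub>R y)) \<partial>lborel) = (\<integral>y. f y * (norm y)\<^sup>2 \<partial>lborel) - (\<integral>y. 2 * (x \<bullet> (f y *\<^sub>R y)) \<partial>lborel)"
      by (rule Bochner_Integration.integral_diff) (use fni xi in auto)
    also have "(\<integral>y. 2 * (x \<bullet> (f y *\<^sub>R y)) \<partial>lborel) = 2 * (\<integral>y. (x \<bullet> (f y *\<^sub>R y)) \<partial>lborel)"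
      by (rule integral_mult_right_zero)
    also have "(\<integral>y. (norm x)\<^sup>2 * f y \<partial>lborel) = (norm x)\<^sup>2 * (\<integral>y. f y \<partial>lborel)"
      by (rule integral_mult_right_zero)
    finally show ?thesis using nn f1 \<open>(\<integral>y. x \<bullet> (f y *\<^sub>R y) \<partial>lborel) = 0\<close> by simp
  qed
qed

theorem corollary2p6:
  fixes f :: "'a::euclidean_space \<Rightarrow> real"
    and x :: 'a and v :: real and c :: real
    and M :: "'b measure" and X :: "'b \<Rightarrow> 'a"
  assumes iso: "isotropic f"
    and v: "v > 0"
    and P: "prob_space M"
    and c: "c > 0"
    and dist: "distributed M lborel X
                 (\<lambda>y. ennreal (c * (f y * exp (- ((norm (x - y))\<^sup>2) / (2 * v)))))"
  shows "prob_space.expectation M (\<lambda>\<omega>. (norm (X \<omega> - x))\<^sup>2) \<le> real DIM('a) + (norm x)\<^sup>2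
         \<and> norm (prob_space.expectation M X - x) \<le> sqrt (real DIM('a)) + norm x"
proof -
  interpret P: prob_space M by (rule P)
  from iso have fm[measurable]: "f \<in> borel_measurable lborel" and f0: "\<And>y. 0 \<le> f y"
    and fi: "integrable lborel f" and f1: "(\<integral>y. f y \<partial>lborel) = 1"
    by (auto simp: isotropic_def)
  define w where "w y = exp (- ((norm (x - y))\<^sup>2) / (2 * v))" for y
  define t where "t y = (norm (y - x))\<^sup>2" for y
  define m where "m = real DIM('a) + (norm x)\<^sup>2"
  define W where "W = exp (- m / (2 * v))"
  have wt: "w y = exp (- t y / (2 * v))" for y by (simp add: w_def t_def norm_minus_commute)
  have w0: "0 \<le> w y" for y by (simp add: w_def)
  have w1: "w y \<le> 1" for y using v by (simp add: wt t_def)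
  have wm[measurable]: "w \<in> borel_measurable lborel" unfolding w_def by measurable
  have tm[measurable]: "t \<in> borel_measurable lborel" unfolding t_def by measurable
  have fti: "integrable lborel (\<lambda>y. f y * t y)" using iso_second_moment(1)[OF iso, of x] by (simp add: t_def)
  have ft: "(\<integral>y. f y * t y \<partial>lborel) = m" using iso_second_moment(2)[OF iso, of x] by (simp add: t_def m_def)
  have fwi: "integrable lborel (\<lambda>y. f y * w y)"
    by (rule Bochner_Integration.integrable_bound[OF fi]) (auto intro!: AE_I2 simp: abs_mult f0 w0 w1 intro: mult_left_le)
  have ftwi: "integrable lborel (\<lambda>y. f y * t y * w y)"
    by (rule Bochner_Integration.integrable_bound[OF fti]) (auto intro!: AE_I2 simp: abs_mult f0 w0 w1 t_def intro: mult_left_le)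
  have D: "distributed M lborel X (\<lambda>y. ennreal (c * (f y * w y)))" using dist by (simp add: w_def)
  have d0: "0 \<le> c * (f y * w y)" for y using c f0 w0 by simp
  have one: "(\<integral>y. c * (f y * w y) * 1 \<partial>lborel) = 1"
    using distributed_integral[OF D, of "\<lambda>_. 1"] d0 by (simp add: P.prob_space)
  have "c * (\<integral>y. f y * w y \<partial>lborel) = 1" using one by simp
  have EX: "P.expectation (\<lambda>\<omega>. t (X \<omega>)) = (\<integral>y. c * (f y * w y) * t y \<partial>lborel)"
    using distributed_integral[OF D, of t] d0 by simp
  have XI: "integrable M (\<lambda>\<omega>. t (X \<omega>))"
    using distributed_integrable[OF D, of t] d0 ftwi by (simp add: mult_ac)
  have pw: "f y * ((t y - m) * (w y - W)) \<le> 0" for y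
  proof -
    have "(t y - m) * (w y - W) \<le> 0"
    proof (cases "t y \<le> m")
      case True
      then have "W \<le> w y" using v by (simp add: wt W_def divide_right_mono)
      then show ?thesis using True by (simp add: mult_nonpos_nonneg)
    next
      case False
      then have "w y \<le> W" using v by (simp add: wt W_def divide_right_mono)
      then show ?thesis using False by (simp add: mult_nonneg_nonpos)
    qed
    then show ?thesis using f0[of y] by (simp add: mult_nonneg_nonpos)
  qed
  have "(\<integral>y. f y * ((t y - m) * (w y - W)) \<partial>lborel) \<le> 0"
  proof -
    have "0 \<le> (\<integral>y. - (f y * ((t y - m) * (w y - W))) \<partial>lborel)"
      using pw by (intro Bochner_Integration.integral_nonneg) (simp add: le_minus_iff)
    then show ?thesis by simp
  qed
  also have "(\<integral>y. f y * ((t y - m) * (w y - W)) \<partial>lborel) =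
     (\<integral>y. f y * t y * w y - m * (f y * w y) - W * (f y * t y) + m * W * f y \<partial>lborel)"
    by (rule Bochner_Integration.integral_cong) (auto simp: algebra_simps)
  also have "\<dots> = (\<integral>y. f y * t y * w y \<partial>lborel) - m * (\<integral>y. f y * w y \<partial>lborel) - W * (\<integral>y. f y * t y \<partial>lborel) + m * W * (\<integral>y. f y \<partial>lborel)"
    using ftwi fwi fti fi by simp
  finally have key: "(\<integral>y. f y * t y * w y \<partial>lborel) \<le> m * (\<integral>y. f y * w y \<partial>lborel)"
    using ft f1 by simp
  have "P.expectation (\<lambda>\<omega>. t (X \<omega>)) = c * (\<integral>y. f y * t y * w y \<partial>lborel)"
    unfolding EX by (simp add: mult_ac)
  also have "\<dots> \<le> c * (m * (\<integral>y. f y * w y \<partial>lborel))" using key c by simp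
  also have "\<dots> = m" using \<open>c * (\<integral>y. f y * w y \<partial>lborel) = 1\<close> by (simp add: mult_ac)
  finally have E1: "P.expectation (\<lambda>\<omega>. t (X \<omega>)) \<le> m" .
  have Xm[measurable]: "X \<in> borel_measurable M"
    using distributed_measurable[OF D] by (simp add: measurable_lborel2)
  define Z where "Z \<omega> = norm (X \<omega> - x)" for \<omega>
  have Zm[measurable]: "Z \<in> borel_measurable M" unfolding Z_def by measurable
  have Z2: "t (X \<omega>) = (Z \<omega>)\<^sup>2" for \<omega> by (simp add: t_def Z_def)
  have Z2i: "integrable M (\<lambda>\<omega>. (Z \<omega>)\<^sup>2)" using XI by (simp add: Z2)
  have Zi: "integrable M Z"
  proof (rule Bochner_Integration.integrable_bound[of M "\<lambda>\<omega>. 1 + (Z \<omega>)\<^sup>2"])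
    show "integrable M (\<lambda>\<omega>. 1 + (Z \<omega>)\<^sup>2)" using Z2i by simp
    show "AE \<omega> in M. norm (Z \<omega>) \<le> norm (1 + (Z \<omega>)\<^sup>2)"
    proof (rule AE_I2)
      fix \<omega>
      have "Z \<omega> \<le> 1 + (Z \<omega>)\<^sup>2"
      proof -
        have "0 \<le> (Z \<omega> - 1)\<^sup>2" by simp
        moreover have "0 \<le> Z \<omega>" by (simp add: Z_def)
        ultimately show ?thesis by (simp add: power2_diff)
      qed
      then show "norm (Z \<omega>) \<le> norm (1 + (Z \<omega>)\<^sup>2)" by (simp add: Z_def)
    qed
  qed simp
  have Xi: "integrable M X"
  proof (rule Bochner_Integration.integrable_bound[of M "\<lambda>\<omega>. Z \<omega> + norm x"])
    show "integrable M (\<lambda>\<omega>. Z \<omega> + norm x)" using Zi by simp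
    show "AE \<omega> in M. norm (X \<omega>) \<le> norm (Z \<omega> + norm x)"
    proof (rule AE_I2)
      fix \<omega>
      have "norm (X \<omega>) \<le> norm (X \<omega> - x) + norm x" using norm_triangle_ineq[of "X \<omega> - x" x] by simp
      then show "norm (X \<omega>) \<le> norm (Z \<omega> + norm x)" by (simp add: Z_def)
    qed
  qed simp
  have "P.expectation X - x = P.expectation (\<lambda>\<omega>. X \<omega> - x)"
    using Xi by (simp add: P.prob_space)
  then have "norm (P.expectation X - x) \<le> P.expectation Z"
    using integral_norm_bound[of M "\<lambda>\<omega>. X \<omega> - x"] unfolding Z_def[abs_def] by simp
  also have "P.expectation Z \<le> sqrt (P.expectation (\<lambda>\<omega>. (Z \<omega>)\<^sup>2))"
  proof -
    have "0 \<le> P.variance Z" by (rule P.variance_positive)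
    then have "(P.expectation Z)\<^sup>2 \<le> P.expectation (\<lambda>\<omega>. (Z \<omega>)\<^sup>2)"
      using P.variance_eq[OF Zi Z2i] by simp
    then show ?thesis using real_le_rsqrt by blast
  qed
  also have "\<dots> \<le> sqrt m" using E1 by (simp add: Z2)
  also have "sqrt m \<le> sqrt (real DIM('a)) + norm x"
  proof -
    have "m \<le> (sqrt (real DIM('a)) + norm x)\<^sup>2"
      by (simp add: m_def power2_sum)
    then show ?thesis using real_le_lsqrt by (simp add: real_sqrt_le_iff real_le_lsqrt)
  qed
  finally show ?thesis using E1 by (simp add: t_def m_def)
qed

end
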